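(* Assume Setting A, suppose $\mathbf I(\lambda^\circ)$ is positive definite, and suppose $E\|D_\lambda\log p_k^*(X_k;\lambda^\circ)\|^2<\infty$ and $E\|D^2_{\lambda\lambda}\log p_k^*(X_k;\lambda^\circ)\|<\infty$ for all $k$. Let $\mathbf W$ be the $K\times K$ matrix with entries $W_{kl}=\Delta_{kl}n_k^{-1}+n_0^{-1}$ ($k,l=1,\dots,K$, $\Delta$ the Kronecker delta). Then (a) $\mathbf I(\lambda^\circ)-\boldsymbol\Sigma(\lambda^\circ)=\mathbf I(\lambda^\circ)\begin{bmatrix}\mathbf 0&\mathbf 0\\ \mathbf 0&\mathbf W\end{bmatrix}\mathbf I(\lambda^\circ)$ (blocks of sizes $S$ and $K$); (b) $[\mathbf I^{-1}(\lambda^\circ)]_{\theta\theta}=[\mathbf I^{-1}(\lambda^\circ)\,\boldsymbol\Sigma(\lambda^\circ)\,\mathbf I^{-1}(\lambda^\circ)]_{\theta\theta}$, where $[\cdot]_{\theta\theta}$ denotes the upper-left $S\times S$ block.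
   Context: Setting A. Let $(\Omega_X,\mathcal B_X)$, $(\Omega_Y,\mathcal B_Y)$ be measurable spaces with a $\sigma$-finite measure $\nu_X$ on $\Omega_X$. Fix $K\ge1$, distinct $y_0,\dots,y_K\in\Omega_Y$, $S\ge1$, and for $\theta\in\mathbb R^S$ and $k=0,\dots,K$ measurable functions $x\mapsto\psi_\theta(x,y_k)$ on $\Omega_X$ with $\psi_\theta(x,y_0)=0$, such that $\theta\mapsto\psi_\theta(x,y_k)$ is three times continuously differentiable for every $x$. Let $\theta^\circ\in\mathbb R^S$ (true parameter) and for each $k$ let $f_k$ be an everywhere positive probability density on $\Omega_X$ w.r.t. $\nu_X$ of the form $\log f_k(x)=\beta(x)+\psi_{\theta^\circ}(x,y_k)-\varepsilon_k$ with a measurable $\beta$ and constants $\varepsilon_k$ (these are the conditional densities of $X$ given $Y=y_k$ under the association model with log-odds ratio $\psi_{\theta^\circ}$). $X_k$ denotes a random element with density $f_k$. Fix $\bar r_0,\dots,\bar r_K>0$ with $\sum_k\bar r_k=1$. On a common probability space let $(X_{ki})_{i\ge1}$, $k=0,\dots,K$, be independent i.i.d. sequences with $X_{ki}\sim X_k$; for $n$ in an increasing sequence with $n_k=\bar r_kn\in\mathbb N$ for all $k$, the sample is $\{X_{ki}:k=0,\dots,K,\ i\le n_k\}$. For $\lambda=(\theta,\gamma^* )\in\mathbb R^S\times\mathbb R^K$, $\gamma^*=(\gamma_1^*,\dots,\gamma_K^* )$, $\gamma_0^*:=0$, put $p_k^*(x;\lambda)=\exp(\gamma_k^*+\psi_\theta(x,y_k))/\sum_{l=0}^K\exp(\gamma_l^*+\psi_\theta(x,y_l))$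 and $\ell^{(n)}(\lambda)=\sum_{k=0}^K\sum_{i=1}^{n_k}\log p_k^*(X_{ki};\lambda)$. The true value is $\lambda^\circ=(\theta^\circ,\gamma^\circ)$ with $\gamma_k^\circ=\log\bar r_k-\varepsilon_k-\log\bar r_0+\varepsilon_0$, so that $p_k^*(x;\lambda^\circ)=\bar r_kf_k(x)/\sum_l\bar r_lf_l(x)$. $D_\lambda$ denotes the gradient in $\lambda$, $\mathbf J^{(n)}(\lambda)=-D^2_{\lambda\lambda}\ell^{(n)}(\lambda)$; $E$, $\mathrm{Cov}$, $P$ refer to the true distribution. Define $\bar{\mathbf I}(\lambda)=\sum_k\bar r_kE[-D^2_{\lambda\lambda}\log p_k^*(X_k;\lambda)]$, $\bar{\boldsymbol\Sigma}(\lambda)=\sum_k\bar r_k\mathrm{Cov}(D_\lambda\log p_k^*(X_k;\lambda))$, $\mathbf I(\lambda)=n\bar{\mathbf I}(\lambda)=E\mathbf J^{(n)}(\lambda)$, $\boldsymbol\Sigma(\lambda)=n\bar{\boldsymbol\Sigma}(\lambda)=\mathrm{Cov}(D_\lambda\ell^{(n)}(\lambda))$. *)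

theory Defs
  imports "HOL-Analysis.Analysis" "HOL-Probability.Probability"
begin

definition partial :: "(real^'n::finite \<Rightarrow> real) \<Rightarrow> 'n \<Rightarrow> real^'n::finite \<Rightarrow> real" where
  "partial g i x = deriv (\<lambda>t. g (x + t *\<^sub>R axis i 1)) 0"

definition has_partials :: "(real^'n::finite \<Rightarrow> real) \<Rightarrow> bool" where
  "has_partials g \<longleftrightarrow> (\<forall>i x. (\<lambda>t. g (x + t *\<^sub>R axis i 1)) differentiable (at 0))"

definition C1_fun :: "(real^'n::finite \<Rightarrow> real) \<Rightarrow> bool" where
  "C1_fun g \<longleftrightarrow> continuous_on UNIV g \<and> has_partials g \<and> (\<forall>i. continuous_on UNIV (partial g i))"

definition C3_fun :: "(real^'n::finite \<Rightarrow> real) \<Rightarrow> bool" where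
  "C3_fun g \<longleftrightarrow> C1_fun g \<and> (\<forall>i. C1_fun (partial g i)) \<and> (\<forall>i j. C1_fun (partial (partial g i) j))"

definition grad :: "(real^'n::finite \<Rightarrow> real) \<Rightarrow> real^'n::finite \<Rightarrow> real^'n" where
  "grad g x = (\<chi> i. partial g i x)"

definition hess :: "(real^'n::finite \<Rightarrow> real) \<Rightarrow> real^'n::finite \<Rightarrow> real^'n^'n" where
  "hess g x = (\<chi> i j. partial (partial g j) i x)"

definition pos_def :: "real^'n::finite^'n \<Rightarrow> bool" where
  "pos_def A \<longleftrightarrow> (\<forall>v. v \<noteq> 0 \<longrightarrow> 0 < v \<bullet> (A *v v))"

text \<open>Parameter lambda = (theta, gamma*) in R^(S+K); class index k :: 'k option, None = class 0.\<close>
definition theta_of :: "real^('s::finite + 'k::finite) \<Rightarrow> real^'s" where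
  "theta_of lam = (\<chi> s. lam $ Inl s)"

definition gam :: "real^('s::finite + 'k::finite) \<Rightarrow> 'k option \<Rightarrow> real" where
  "gam lam k = (case k of None \<Rightarrow> 0 | Some j \<Rightarrow> lam $ Inr j)"

definition p_star :: "(real^'s \<Rightarrow> 'x \<Rightarrow> 'y \<Rightarrow> real) \<Rightarrow> ('k::finite option \<Rightarrow> 'y)
    \<Rightarrow> 'k option \<Rightarrow> 'x \<Rightarrow> real^('s::finite + 'k::finite) \<Rightarrow> real" where
  "p_star \<psi> y k x lam =
     exp (gam lam k + \<psi> (theta_of lam) x (y k)) /
     (\<Sum>l\<in>UNIV. exp (gam lam l + \<psi> (theta_of lam) x (y l)))"

definition true_param :: "real^'s \<Rightarrow> ('k option \<Rightarrow> real) \<Rightarrow> ('k option \<Rightarrow> real) \<Rightarrow> real^('s::finite + 'k::finite)" where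
  "true_param \<theta>0 r \<epsilon> = (\<chi> a. case a of Inl s \<Rightarrow> \<theta>0 $ s
       | Inr j \<Rightarrow> ln (r (Some j)) - \<epsilon> (Some j) - ln (r None) + \<epsilon> None)"

definition cov_mat :: "'x measure \<Rightarrow> ('x \<Rightarrow> real^'n) \<Rightarrow> real^'n^'n" where
  "cov_mat P V = (\<chi> i j. \<integral>x. (V x $ i - (\<integral>z. V z $ i \<partial>P)) * (V x $ j - (\<integral>z. V z $ j \<partial>P)) \<partial>P)"

definition distr_k :: "'x measure \<Rightarrow> ('k option \<Rightarrow> 'x \<Rightarrow> real) \<Rightarrow> 'k option \<Rightarrow> 'x measure" where
  "distr_k M f k = density M (\<lambda>x. ennreal (f k x))"

definition Ibar :: "'x measure \<Rightarrow> (real^'s \<Rightarrow> 'x \<Rightarrow> 'y \<Rightarrow> real) \<Rightarrow> ('k::finite option \<Rightarrow> 'y)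
    \<Rightarrow> ('k option \<Rightarrow> real) \<Rightarrow> ('k option \<Rightarrow> 'x \<Rightarrow> real) \<Rightarrow> real^('s::finite + 'k::finite) \<Rightarrow> real^('s::finite+'k::finite)^('s+'k)" where
  "Ibar M \<psi> y r f lam = (\<Sum>k\<in>UNIV. r k *\<^sub>R
     (\<chi> i j. \<integral>x. - (hess (\<lambda>l. ln (p_star \<psi> y k x l)) lam $ i $ j) \<partial>(distr_k M f k)))"

definition Sigmabar :: "'x measure \<Rightarrow> (real^'s \<Rightarrow> 'x \<Rightarrow> 'y \<Rightarrow> real) \<Rightarrow> ('k::finite option \<Rightarrow> 'y)
    \<Rightarrow> ('k option \<Rightarrow> real) \<Rightarrow> ('k option \<Rightarrow> 'x \<Rightarrow> real) \<Rightarrow> real^('s::finite + 'k::finite) \<Rightarrow> real^('s::finite+'k::finite)^('s+'k)" where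
  "Sigmabar M \<psi> y r f lam = (\<Sum>k\<in>UNIV. r k *\<^sub>R
     cov_mat (distr_k M f k) (\<lambda>x. grad (\<lambda>l. ln (p_star \<psi> y k x l)) lam))"

definition Wblock :: "('k option \<Rightarrow> nat) \<Rightarrow> real^('s::finite + 'k::finite)^('s + 'k)" where
  "Wblock nk = (\<chi> a b. case (a, b) of
      (Inr k, Inr l) \<Rightarrow> (if k = l then 1 / real (nk (Some k)) else 0) + 1 / real (nk None)
    | _ \<Rightarrow> 0)"

definition theta_block :: "real^('s::finite + 'k::finite)^('s + 'k) \<Rightarrow> real^'s^'s" where
  "theta_block A = (\<chi> i j. A $ Inl i $ Inl j)"

end

theory Submission
  imports Defs
begin


definition Zf :: "('k::finite option \<Rightarrow> real^'s::finite \<Rightarrow> real) \<Rightarrow> real^('s+'k) \<Rightarrow> real" where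
  "Zf \<Psi> lam = (\<Sum>l\<in>UNIV. exp (gam lam l + \<Psi> l (theta_of lam)))"

definition PS :: "('k::finite option \<Rightarrow> real^'s::finite \<Rightarrow> real) \<Rightarrow> 'k option \<Rightarrow> real^('s+'k) \<Rightarrow> real" where
  "PS \<Psi> k lam = exp (gam lam k + \<Psi> k (theta_of lam)) / Zf \<Psi> lam"

definition GG :: "('k::finite option \<Rightarrow> real^'s::finite \<Rightarrow> real) \<Rightarrow> 'k option \<Rightarrow> 's + 'k \<Rightarrow> real^('s+'k) \<Rightarrow> real" where
  "GG \<Psi> k i lam = (case i of Inl s \<Rightarrow> partial (\<Psi> k) s (theta_of lam)
        - (\<Sum>l\<in>UNIV. PS \<Psi> l lam * partial (\<Psi> l) s (theta_of lam))
     | Inr j \<Rightarrow> (if k = Some j then 1 else 0) - PS \<Psi> (Some j) lam)"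

lemma Zf_pos: "0 < Zf \<Psi> lam"
  unfolding Zf_def by (intro sum_pos) auto

lemma PS_pos: "0 < PS \<Psi> k lam"
  unfolding PS_def using Zf_pos[of \<Psi> lam] by (intro divide_pos_pos) auto

lemma PS_sum: "(\<Sum>k\<in>UNIV. PS \<Psi> k lam) = 1"
  unfolding PS_def using Zf_pos[of \<Psi> lam] by (simp add: sum_divide_distrib[symmetric] Zf_def)

lemma ln_PS: "ln (PS \<Psi> k lam) = gam lam k + \<Psi> k (theta_of lam) - ln (Zf \<Psi> lam)"
  unfolding PS_def using Zf_pos[of \<Psi> lam] by (simp add: ln_div)

lemma theta_shift_Inl: "theta_of (lam + t *\<^sub>R axis (Inl s) 1) = theta_of lam + t *\<^sub>R axis s 1"
  by (simp add: vec_eq_iff theta_of_def axis_def)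

lemma theta_shift_Inr: "theta_of (lam + t *\<^sub>R axis (Inr j) 1) = theta_of lam"
  by (simp add: vec_eq_iff theta_of_def axis_def)

lemma gam_shift_Inl: "gam (lam + t *\<^sub>R axis (Inl s) 1) l = gam lam l"
  by (simp add: gam_def axis_def split: option.splits)

lemma gam_shift_Inr: "gam (lam + t *\<^sub>R axis (Inr j) 1) l = gam lam l + (if l = Some j then t else 0)"
  by (auto simp add: gam_def axis_def split: option.splits)

lemma axis_deriv: "has_partials g \<Longrightarrow> DERIV (\<lambda>t. g (x + t *\<^sub>R axis i 1)) 0 :> partial g i x"
  unfolding has_partials_def partial_def
  using DERIV_deriv_iff_real_differentiable by blast

lemma D1:
  assumes hp: "\<And>k. has_partials (\<Psi> k)"
  shows "DERIV (\<lambda>t. ln (PS \<Psi> k (lam + t *\<^sub>R axis i 1))) 0 :> GG \<Psi> k i lam"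
proof (cases i)
  case (Inl s)
  let ?c = "\<lambda>l. gam lam l" and ?th = "theta_of lam"
  have e: "(\<lambda>t. ln (PS \<Psi> k (lam + t *\<^sub>R axis i 1))) =
     (\<lambda>t. ?c k + \<Psi> k (?th + t *\<^sub>R axis s 1) - ln (\<Sum>l\<in>UNIV. exp (?c l + \<Psi> l (?th + t *\<^sub>R axis s 1))))"
    by (simp add: ln_PS Inl theta_shift_Inl gam_shift_Inl Zf_def)
  have d: "\<And>l. DERIV (\<lambda>t. \<Psi> l (?th + t *\<^sub>R axis s 1)) 0 :> partial (\<Psi> l) s ?th"
    using axis_deriv[OF hp] .
  have Z: "(\<Sum>l\<in>UNIV. exp (?c l + \<Psi> l (?th + 0 *\<^sub>R axis s 1))) = Zf \<Psi> lam"
    by (simp add: Zf_def)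
  have ds: "DERIV (\<lambda>t. (\<Sum>l\<in>UNIV. exp (?c l + \<Psi> l (?th + t *\<^sub>R axis s 1)))) 0
       :> (\<Sum>l\<in>UNIV. exp (?c l + \<Psi> l ?th) * partial (\<Psi> l) s ?th)"
  proof (rule DERIV_sum)
    fix l
    have "DERIV (\<lambda>t. ?c l + \<Psi> l (?th + t *\<^sub>R axis s 1)) 0 :> 0 + partial (\<Psi> l) s ?th"
      by (intro DERIV_add DERIV_const d)
    from DERIV_chain2[OF DERIV_exp this] show "DERIV (\<lambda>t. exp (?c l + \<Psi> l (?th + t *\<^sub>R axis s 1))) 0
       :> exp (?c l + \<Psi> l ?th) * partial (\<Psi> l) s ?th" by simp
  qed
  have Z0: "0 < (\<Sum>l\<in>UNIV. exp (?c l + \<Psi> l (?th + 0 *\<^sub>R axis s 1)))"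
    using Z Zf_pos by simp
  have dl: "DERIV (\<lambda>t. ln (\<Sum>l\<in>UNIV. exp (?c l + \<Psi> l (?th + t *\<^sub>R axis s 1)))) 0
       :> inverse (Zf \<Psi> lam) * (\<Sum>l\<in>UNIV. exp (?c l + \<Psi> l ?th) * partial (\<Psi> l) s ?th)"
    using DERIV_chain2[OF DERIV_ln[OF Z0] ds] Z by simp
  have "DERIV (\<lambda>t. ?c k + \<Psi> k (?th + t *\<^sub>R axis s 1) - ln (\<Sum>l\<in>UNIV. exp (?c l + \<Psi> l (?th + t *\<^sub>R axis s 1)))) 0
     :> 0 + partial (\<Psi> k) s ?th - inverse (Zf \<Psi> lam) * (\<Sum>l\<in>UNIV. exp (?c l + \<Psi> l ?th) * partial (\<Psi> l) s ?th)"
    by (intro DERIV_diff DERIV_add DERIV_const d dl)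
  also have "0 + partial (\<Psi> k) s ?th - inverse (Zf \<Psi> lam) * (\<Sum>l\<in>UNIV. exp (?c l + \<Psi> l ?th) * partial (\<Psi> l) s ?th)
      = GG \<Psi> k i lam"
    by (simp add: GG_def Inl PS_def sum_divide_distrib sum_distrib_left field_simps)
  finally show ?thesis unfolding e .
next
  case (Inr j)
  let ?c = "\<lambda>l. gam lam l + \<Psi> l (theta_of lam)" and ?d = "\<lambda>l. if l = Some j then 1 else (0::real)"
  have e: "(\<lambda>t. ln (PS \<Psi> k (lam + t *\<^sub>R axis i 1))) =
     (\<lambda>t. ?c k + t * ?d k - ln (\<Sum>l\<in>UNIV. exp (?c l + t * ?d l)))"
  proof -
    have q: "\<And>t l. gam (lam + t *\<^sub>R axis i 1) l + \<Psi> l (theta_of (lam + t *\<^sub>R axis i 1)) = ?c l + t * ?d l"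
      by (simp add: Inr theta_shift_Inr gam_shift_Inr)
    show ?thesis by (rule ext) (simp only: ln_PS Zf_def q)
  qed
  have Z: "(\<Sum>l\<in>UNIV. exp (?c l + 0 * ?d l)) = Zf \<Psi> lam"
    by (simp add: Zf_def)
  have ds: "DERIV (\<lambda>t. (\<Sum>l\<in>UNIV. exp (?c l + t * ?d l))) 0 :> (\<Sum>l\<in>UNIV. exp (?c l) * ?d l)"
  proof (rule DERIV_sum)
    fix l
    have "DERIV (\<lambda>t. ?c l + t * ?d l) 0 :> 0 + 1 * ?d l"
      by (intro DERIV_add DERIV_const DERIV_cmult_right DERIV_ident)
    from DERIV_chain2[OF DERIV_exp this] show "DERIV (\<lambda>t. exp (?c l + t * ?d l)) 0 :> exp (?c l) * ?d l" by simp
  qed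
  have Z0: "0 < (\<Sum>l\<in>UNIV. exp (?c l + 0 * ?d l))"
    using Z Zf_pos by simp
  have dl: "DERIV (\<lambda>t. ln (\<Sum>l\<in>UNIV. exp (?c l + t * ?d l))) 0 :> inverse (Zf \<Psi> lam) * (\<Sum>l\<in>UNIV. exp (?c l) * ?d l)"
    using DERIV_chain2[OF DERIV_ln[OF Z0] ds] Z by simp
  have "DERIV (\<lambda>t. ?c k + t * ?d k - ln (\<Sum>l\<in>UNIV. exp (?c l + t * ?d l))) 0
     :> 0 + 1 * ?d k - inverse (Zf \<Psi> lam) * (\<Sum>l\<in>UNIV. exp (?c l) * ?d l)"
    by (intro DERIV_diff DERIV_add DERIV_const DERIV_cmult_right DERIV_ident dl)
  also have "0 + 1 * ?d k - inverse (Zf \<Psi> lam) * (\<Sum>l\<in>UNIV. exp (?c l) * ?d l) = GG \<Psi> k i lam"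
    by (simp add: GG_def Inr PS_def if_distrib field_simps cong: if_cong)
  finally show ?thesis unfolding e .
qed

lemma partial_L: assumes hp: "\<And>k. has_partials (\<Psi> k)"
  shows "partial (\<lambda>l. ln (PS \<Psi> k l)) i lam = GG \<Psi> k i lam"
  unfolding partial_def using D1[OF hp] by (rule DERIV_imp_deriv)

lemma partial_L_fun: assumes hp: "\<And>k. has_partials (\<Psi> k)"
  shows "partial (\<lambda>l. ln (PS \<Psi> k l)) i = GG \<Psi> k i"
  using partial_L[OF hp] by (rule ext)

lemma P1: "(\<Sum>k\<in>UNIV. PS \<Psi> k lam * GG \<Psi> k i lam) = 0"
proof (cases i)
  case (Inl s)
  show ?thesis
    by (simp add: GG_def Inl right_diff_distrib sum_subtractf sum_distrib_right[symmetric] PS_sum)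
next
  case (Inr j)
  have "(\<Sum>k\<in>UNIV. PS \<Psi> k lam * (if k = Some j then 1 else 0)) = PS \<Psi> (Some j) lam"
    by (simp add: if_distrib cong: if_cong)
  then show ?thesis
    by (simp add: GG_def Inr right_diff_distrib sum_subtractf sum_distrib_right[symmetric] PS_sum)
qed

lemma PS_deriv: assumes hp: "\<And>k. has_partials (\<Psi> k)"
  shows "DERIV (\<lambda>t. PS \<Psi> k (lam + t *\<^sub>R axis i 1)) 0 :> PS \<Psi> k lam * GG \<Psi> k i lam"
proof -
  have e: "(\<lambda>t. PS \<Psi> k (lam + t *\<^sub>R axis i 1)) = (\<lambda>t. exp (ln (PS \<Psi> k (lam + t *\<^sub>R axis i 1))))"
    by (intro ext exp_ln[symmetric] PS_pos)
  show ?thesis unfolding e using DERIV_chain2[OF DERIV_exp D1[of \<Psi>, OF hp, of k lam i]] by (simp add: PS_pos)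
qed

lemma D2:
  assumes hp: "\<And>k. has_partials (\<Psi> k)" and hp2: "\<And>k s. has_partials (partial (\<Psi> k) s)"
  shows "(\<lambda>t. GG \<Psi> k j (lam + t *\<^sub>R axis i 1)) differentiable (at 0)"
proof -
  have dPS: "\<And>l. (\<lambda>t. PS \<Psi> l (lam + t *\<^sub>R axis i 1)) differentiable (at 0)"
    using PS_deriv[of \<Psi>, OF hp] real_differentiable_def by blast
  have dP: "\<And>l s. (\<lambda>t. partial (\<Psi> l) s (theta_of (lam + t *\<^sub>R axis i 1))) differentiable (at 0)"
  proof (cases i)
    case (Inl s')
    fix l s
    show "(\<lambda>t. partial (\<Psi> l) s (theta_of (lam + t *\<^sub>R axis i 1))) differentiable (at 0)"
      using hp2[of l s] unfolding has_partials_def Inl theta_shift_Inl by blast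
  next
    case (Inr j)
    fix l s
    show "(\<lambda>t. partial (\<Psi> l) s (theta_of (lam + t *\<^sub>R axis i 1))) differentiable (at 0)"
      unfolding Inr theta_shift_Inr by simp
  qed
  show ?thesis
  proof (cases j)
    case (Inl s)
    show ?thesis unfolding GG_def Inl
      by (simp, intro derivative_intros dPS dP ballI finite)
  next
    case (Inr j')
    show ?thesis unfolding GG_def Inr
      by (simp only: sum.simps) (intro derivative_intros dPS)
  qed
qed

lemma P2:
  assumes hp: "\<And>k. has_partials (\<Psi> k)" and hp2: "\<And>k s. has_partials (partial (\<Psi> k) s)"
  shows "(\<Sum>k\<in>UNIV. PS \<Psi> k lam * (partial (GG \<Psi> k j) i lam + GG \<Psi> k i lam * GG \<Psi> k j lam)) = 0"
proof -
  have dG: "\<And>k. DERIV (\<lambda>t. GG \<Psi> k j (lam + t *\<^sub>R axis i 1)) 0 :> partial (GG \<Psi> k j) i lam"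
    unfolding partial_def using D2[of \<Psi>, OF hp hp2] DERIV_deriv_iff_real_differentiable by blast
  have "DERIV (\<lambda>t. \<Sum>k\<in>UNIV. PS \<Psi> k (lam + t *\<^sub>R axis i 1) * GG \<Psi> k j (lam + t *\<^sub>R axis i 1)) 0
     :> (\<Sum>k\<in>UNIV. PS \<Psi> k (lam + 0 *\<^sub>R axis i 1) * partial (GG \<Psi> k j) i lam
          + PS \<Psi> k lam * GG \<Psi> k i lam * GG \<Psi> k j (lam + 0 *\<^sub>R axis i 1))"
    by (intro DERIV_sum DERIV_mult' PS_deriv[of \<Psi>, OF hp] dG)
  moreover have "(\<lambda>t. \<Sum>k\<in>UNIV. PS \<Psi> k (lam + t *\<^sub>R axis i 1) * GG \<Psi> k j (lam + t *\<^sub>R axis i 1)) = (\<lambda>t. 0)"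
    using P1 by (rule ext)
  ultimately have "DERIV (\<lambda>t. 0::real) 0 :> (\<Sum>k\<in>UNIV. PS \<Psi> k lam * partial (GG \<Psi> k j) i lam
          + PS \<Psi> k lam * GG \<Psi> k i lam * GG \<Psi> k j lam)" by simp
  then have "(\<Sum>k\<in>UNIV. PS \<Psi> k lam * partial (GG \<Psi> k j) i lam
          + PS \<Psi> k lam * GG \<Psi> k i lam * GG \<Psi> k j lam) = 0"
    using DERIV_const DERIV_unique by blast
  then show ?thesis by (simp add: algebra_simps)
qed

lemma partial_lim:
  assumes "DERIV (\<lambda>t. g (x + t *\<^sub>R axis i 1)) 0 :> D"
  shows "(\<lambda>n. (g (x + (1 / real (Suc n)) *\<^sub>R axis i 1) - g x) / (1 / real (Suc n))) \<longlonglongrightarrow> D"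
proof -
  have L: "((\<lambda>h. (g (x + h *\<^sub>R axis i 1) - g x) / h) \<longlongrightarrow> D) (at 0)"
    using assms by (simp add: DERIV_def)
  have F: "filterlim (\<lambda>n. 1 / real (Suc n)) (at 0) sequentially"
    unfolding filterlim_at using LIMSEQ_inverse_real_of_nat by (simp add: inverse_eq_divide)
  show ?thesis by (rule filterlim_compose[OF L F])
qed

lemma meas_partial:
  assumes m: "\<And>lam. (\<lambda>x. h x lam) \<in> borel_measurable M"
    and d: "\<And>x. x \<in> space M \<Longrightarrow> (\<lambda>t. h x (lam + t *\<^sub>R axis i 1)) differentiable (at 0)"
  shows "(\<lambda>x. partial (h x) i lam) \<in> borel_measurable M"
proof (rule borel_measurable_LIMSEQ_real)
  fix x assume "x \<in> space M"
  then have "DERIV (\<lambda>t. h x (lam + t *\<^sub>R axis i 1)) 0 :> partial (h x) i lam"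
    unfolding partial_def using d DERIV_deriv_iff_real_differentiable by blast
  from partial_lim[OF this]
  show "(\<lambda>n. (h x (lam + (1 / real (Suc n)) *\<^sub>R axis i 1) - h x lam) / (1 / real (Suc n))) \<longlonglongrightarrow> partial (h x) i lam" .
next
  fix n
  show "(\<lambda>x. (h x (lam + (1 / real (Suc n)) *\<^sub>R axis i 1) - h x lam) / (1 / real (Suc n))) \<in> borel_measurable M"
    using m by measurable
qed

lemma p_star_PS: "p_star \<psi> y k x = PS (\<lambda>k \<theta>. \<psi> \<theta> x (y k)) k"
  by (rule ext) (simp add: p_star_def PS_def Zf_def)

lemma C3_hp: "C3_fun g \<Longrightarrow> has_partials g"
  by (simp add: C3_fun_def C1_fun_def)

lemma C3_hp2: "C3_fun g \<Longrightarrow> has_partials (partial g i)"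
  by (simp add: C3_fun_def C1_fun_def)

lemma meas_p_star:
  assumes psi_meas: "\<And>\<theta> k. (\<lambda>x. \<psi> \<theta> x (y k)) \<in> borel_measurable M"
  shows "(\<lambda>x. p_star \<psi> y k x lam) \<in> borel_measurable M"
  unfolding p_star_def using psi_meas by measurable



lemma cov_expand:
  fixes a b :: "'a \<Rightarrow> real"
  assumes P: "prob_space P" and ia: "integrable P a" and ib: "integrable P b" and iab: "integrable P (\<lambda>x. a x * b x)"
  shows "(\<integral>x. (a x - (\<integral>z. a z \<partial>P)) * (b x - (\<integral>z. b z \<partial>P)) \<partial>P)
       = (\<integral>x. a x * b x \<partial>P) - (\<integral>z. a z \<partial>P) * (\<integral>z. b z \<partial>P)"
proof -
  interpret prob_space P by (rule P)
  let ?A = "\<integral>z. a z \<partial>P" and ?B = "\<integral>z. b z \<partial>P"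
  have e: "\<And>x. (a x - ?A) * (b x - ?B) = a x * b x - ?B * a x - ?A * b x + ?A * ?B"
    by algebra
  show ?thesis unfolding e
    using ia ib iab by (simp add: prob_space)
qed

lemma matrix_diff_ldistrib: "(A::real^'n^'m) ** (B - C) = A ** B - A ** C"
  by (simp add: matrix_matrix_mult_def vec_eq_iff sum_subtractf algebra_simps)

lemma matrix_diff_rdistrib: "((B::real^'n^'m) - C) ** A = B ** A - C ** A"
  by (simp add: matrix_matrix_mult_def vec_eq_iff sum_subtractf algebra_simps)

lemma sum_option_UNIV: "(\<Sum>k\<in>(UNIV::'a::finite option set). F k) = F None + (\<Sum>j\<in>UNIV. F (Some j))"
  by (simp add: UNIV_option_conv sum.reindex)

lemma sum_plus_UNIV: "(\<Sum>b\<in>(UNIV::('a::finite+'b::finite) set). F b) = (\<Sum>a\<in>UNIV. F (Inl a)) + (\<Sum>c\<in>UNIV. F (Inr c))"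
  using sum.Plus[of "UNIV::'a set" "UNIV::'b set" F] by (simp add: comp_def)

lemma abs_le_1_sq: "\<bar>t::real\<bar> \<le> 1 + t * t"
proof -
  have "0 \<le> (\<bar>t\<bar> - 1) * (\<bar>t\<bar> - 1)" by simp
  moreover have "\<bar>t\<bar> * \<bar>t\<bar> = t * t" by (simp add: abs_mult_self_eq)
  ultimately show ?thesis by (simp add: algebra_simps)
qed

lemma triple:
  fixes u :: "'k \<Rightarrow> 'a \<Rightarrow> real" and X Y :: "'a \<Rightarrow> real" and c :: "'k \<Rightarrow> real"
  assumes "finite A" "finite B" "finite K"
  shows "(\<Sum>b\<in>B. (\<Sum>a\<in>A. X a * (\<Sum>k\<in>K. c k * (u k a * u k b))) * Y b)
       = (\<Sum>k\<in>K. c k * (\<Sum>a\<in>A. X a * u k a) * (\<Sum>b\<in>B. Y b * u k b))"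
proof -
  have "(\<Sum>b\<in>B. (\<Sum>a\<in>A. X a * (\<Sum>k\<in>K. c k * (u k a * u k b))) * Y b)
      = (\<Sum>b\<in>B. \<Sum>a\<in>A. \<Sum>k\<in>K. c k * X a * u k a * Y b * u k b)"
    by (simp add: sum_distrib_left sum_distrib_right mult_ac)
  also have "\<dots> = (\<Sum>a\<in>A. \<Sum>b\<in>B. \<Sum>k\<in>K. c k * X a * u k a * Y b * u k b)"
    by (rule sum.swap)
  also have "\<dots> = (\<Sum>a\<in>A. \<Sum>k\<in>K. \<Sum>b\<in>B. c k * X a * u k a * Y b * u k b)"
    by (intro sum.cong refl sum.swap)
  also have "\<dots> = (\<Sum>k\<in>K. \<Sum>a\<in>A. \<Sum>b\<in>B. c k * X a * u k a * Y b * u k b)"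
    by (rule sum.swap)
  also have "\<dots> = (\<Sum>k\<in>K. c k * (\<Sum>a\<in>A. X a * u k a) * (\<Sum>b\<in>B. Y b * u k b))"
    by (simp add: sum_distrib_left sum_distrib_right mult_ac)
  finally show ?thesis .
qed

theorem theorem3:
  fixes M :: "'x measure"
    and \<psi> :: "real^'s \<Rightarrow> 'x \<Rightarrow> 'y \<Rightarrow> real"
    and y :: "'k::finite option \<Rightarrow> 'y"
    and \<theta>0 :: "real^'s"
    and f :: "'k option \<Rightarrow> 'x \<Rightarrow> real"
    and \<beta> :: "'x \<Rightarrow> real"
    and \<epsilon> :: "'k option \<Rightarrow> real"
    and r :: "'k option \<Rightarrow> real"
    and n :: nat
    and nk :: "'k option \<Rightarrow> nat"
  defines "lam0 \<equiv> true_param \<theta>0 r \<epsilon>"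
    and "I \<equiv> real n *\<^sub>R Ibar M \<psi> y r f (true_param \<theta>0 r \<epsilon>)"
    and "Sig \<equiv> real n *\<^sub>R Sigmabar M \<psi> y r f (true_param \<theta>0 r \<epsilon>)"
  assumes sf: "sigma_finite_measure M"
    and y_inj: "inj y"
    and psi_meas: "\<And>\<theta> k. (\<lambda>x. \<psi> \<theta> x (y k)) \<in> borel_measurable M"
    and psi_0: "\<And>\<theta> x. x \<in> space M \<Longrightarrow> \<psi> \<theta> x (y None) = 0"
    and psi_C3: "\<And>x k. x \<in> space M \<Longrightarrow> C3_fun (\<lambda>\<theta>. \<psi> \<theta> x (y k))"
    and f_meas: "\<And>k. f k \<in> borel_measurable M"
    and f_pos: "\<And>k x. x \<in> space M \<Longrightarrow> 0 < f k x"
    and f_prob: "\<And>k. (\<integral>\<^sup>+x. ennreal (f k x) \<partial>M) = 1"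
    and beta_meas: "\<beta> \<in> borel_measurable M"
    and f_form: "\<And>k x. x \<in> space M \<Longrightarrow> ln (f k x) = \<beta> x + \<psi> \<theta>0 x (y k) - \<epsilon> k"
    and r_pos: "\<And>k. 0 < r k"
    and r_sum: "(\<Sum>k\<in>UNIV. r k) = 1"
    and n_pos: "0 < n"
    and nk_def: "\<And>k. real (nk k) = r k * real n"
    and I_pd: "pos_def I"
    and grad_sq: "\<And>k. (\<integral>\<^sup>+x. ennreal ((norm (grad (\<lambda>l. ln (p_star \<psi> y k x l)) lam0))\<^sup>2)
                        \<partial>(distr_k M f k)) < \<infinity>"
    and hess_int: "\<And>k. (\<integral>\<^sup>+x. ennreal (norm (hess (\<lambda>l. ln (p_star \<psi> y k x l)) lam0))
                        \<partial>(distr_k M f k)) < \<infinity>"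
  shows "I - Sig = I ** Wblock nk ** I \<and>
         theta_block (matrix_inv I) = theta_block (matrix_inv I ** Sig ** matrix_inv I)"
proof -
  define s where "s k x = grad (\<lambda>l. ln (p_star \<psi> y k x l)) lam0" for k x
  define H where "H k x = hess (\<lambda>l. ln (p_star \<psi> y k x l)) lam0" for k x
  define p where "p k x = p_star \<psi> y k x lam0" for k x
  define \<Psi> where "\<Psi> x = (\<lambda>k \<theta>. \<psi> \<theta> x (y k))" for x
  define g where "g x = (\<Sum>l\<in>UNIV. r l * f l x)" for x
  define P where "P k = distr_k M f k" for k
  have hp: "\<And>x k. x \<in> space M \<Longrightarrow> has_partials (\<Psi> x k)"
    unfolding \<Psi>_def using psi_C3 C3_hp by blast
  have hp2: "\<And>x k i. x \<in> space M \<Longrightarrow> has_partials (partial (\<Psi> x k) i)"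
    unfolding \<Psi>_def using psi_C3 C3_hp2 by blast
  have pPS: "\<And>k x. p_star \<psi> y k x = PS (\<Psi> x) k"
    unfolding \<Psi>_def by (rule p_star_PS)
  have s_eq: "\<And>k x i. x \<in> space M \<Longrightarrow> s k x $ i = GG (\<Psi> x) k i lam0"
    unfolding s_def grad_def pPS using partial_L[of "\<Psi> _", OF hp] by simp
  have H_eq: "\<And>k x i j. x \<in> space M \<Longrightarrow> H k x $ i $ j = partial (GG (\<Psi> x) k j) i lam0"
    unfolding H_def hess_def pPS using partial_L_fun[of "\<Psi> _", OF hp] by simp
  have p_eq: "\<And>k x. p k x = PS (\<Psi> x) k lam0"
    unfolding p_def pPS ..
  have Q1: "\<And>x i. x \<in> space M \<Longrightarrow> (\<Sum>k\<in>UNIV. p k x * s k x $ i) = 0"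
    by (simp add: s_eq p_eq P1)
  have Q2: "\<And>x i j. x \<in> space M \<Longrightarrow> (\<Sum>k\<in>UNIV. p k x * (H k x $ i $ j + s k x $ i * s k x $ j)) = 0"
    by (simp add: s_eq p_eq H_eq P2[of "\<Psi> _", OF hp hp2])
  have Q3: "\<And>x k j. x \<in> space M \<Longrightarrow> s k x $ Inr j = (if k = Some j then 1 else 0) - p (Some j) x"
    by (simp add: s_eq p_eq GG_def)
  have p_pos: "\<And>k x. 0 < p k x" by (simp add: p_eq PS_pos)
  have p_sum: "\<And>x. (\<Sum>k\<in>UNIV. p k x) = 1" by (simp add: p_eq PS_sum)
  have p_le1: "\<And>k x. p k x \<le> 1"
  proof -
    fix k x
    have "p k x \<le> (\<Sum>k\<in>UNIV. p k x)"
      by (rule member_le_sum) (auto intro: less_imp_le p_pos)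
    then show "p k x \<le> 1" using p_sum by simp
  qed
  have mp[measurable]: "\<And>k. (\<lambda>x. p k x) \<in> borel_measurable M"
    unfolding p_def using meas_p_star[of \<psi> y M, OF psi_meas] .
  have mL: "\<And>k lam. (\<lambda>x. ln (p_star \<psi> y k x lam)) \<in> borel_measurable M"
    using meas_p_star[of \<psi> y M, OF psi_meas] by measurable
  have dL: "\<And>k x lam i. x \<in> space M \<Longrightarrow> (\<lambda>t. ln (p_star \<psi> y k x (lam + t *\<^sub>R axis i 1))) differentiable (at 0)"
    unfolding pPS real_differentiable_def using D1[of "\<Psi> _", OF hp] by blast
  have mG: "\<And>k j lam. (\<lambda>x. partial (\<lambda>l. ln (p_star \<psi> y k x l)) j lam) \<in> borel_measurable M"
    by (rule meas_partial[OF mL dL])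
  have ms[measurable]: "\<And>k i. (\<lambda>x. s k x $ i) \<in> borel_measurable M"
    unfolding s_def grad_def using mG by simp
  have dG: "\<And>k x lam i j. x \<in> space M \<Longrightarrow> (\<lambda>t. partial (\<lambda>l. ln (p_star \<psi> y k x l)) j (lam + t *\<^sub>R axis i 1)) differentiable (at 0)"
    unfolding pPS using D2[of "\<Psi> _", OF hp hp2] partial_L_fun[of "\<Psi> _", OF hp] by simp
  have mH[measurable]: "\<And>k i j. (\<lambda>x. H k x $ i $ j) \<in> borel_measurable M"
    unfolding H_def hess_def using meas_partial[OF mG dG] by simp

  have fm[measurable]: "\<And>k. f k \<in> borel_measurable M" by (rule f_meas)
  have fnn: "\<And>k. AE x in M. 0 \<le> f k x" using f_pos by (auto intro!: AE_I2 less_imp_le)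
  have P_eq: "\<And>k. P k = density M (\<lambda>x. ennreal (f k x))" by (simp add: P_def distr_k_def)
  have probP: "\<And>k. prob_space (P k)"
  proof -
    fix k
    have "emeasure (P k) (space (P k)) = (\<integral>\<^sup>+x. ennreal (f k x) * indicator (space M) x \<partial>M)"
      by (simp add: P_eq emeasure_density)
    also have "\<dots> = (\<integral>\<^sup>+x. ennreal (f k x) \<partial>M)"
      by (intro nn_integral_cong) simp
    also have "\<dots> = 1" by (rule f_prob)
    finally show "prob_space (P k)" by (rule prob_spaceI)
  qed
  have intP: "integral\<^sup>L (P k) h = (\<integral>x. f k x * h x \<partial>M)" if "h \<in> borel_measurable M" for k h
    using integral_density[OF that fm fnn] by (simp add: P_eq)
  have integrableP: "integrable (P k) h \<longleftrightarrow> integrable M (\<lambda>x. f k x * h x)" if "h \<in> borel_measurable M" for k h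
    using integrable_density[OF that fm fnn] by (simp add: P_eq)
  have th0: "theta_of lam0 = \<theta>0" by (simp add: lam0_def theta_of_def true_param_def vec_eq_iff)
  have gam0: "\<And>l. gam lam0 l = ln (r l) - \<epsilon> l - ln (r None) + \<epsilon> None"
    by (auto simp: lam0_def gam_def true_param_def split: option.splits)
  have expE: "\<And>x l. x \<in> space M \<Longrightarrow> exp (gam lam0 l + \<psi> (theta_of lam0) x (y l)) = r l * f l x * (exp (\<epsilon> None - \<beta> x) / r None)"
  proof -
    fix x l assume x: "x \<in> space M"
    have "gam lam0 l + \<psi> (theta_of lam0) x (y l) = ln (r l) + ln (f l x) + (\<epsilon> None - \<beta> x) - ln (r None)"
      using f_form[OF x, of l] by (simp add: gam0 th0)
    then show "exp (gam lam0 l + \<psi> (theta_of lam0) x (y l)) = r l * f l x * (exp (\<epsilon> None - \<beta> x) / r None)"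
      using r_pos f_pos[OF x] by (simp add: exp_add exp_diff)
  qed
  have g_pos: "\<And>x. x \<in> space M \<Longrightarrow> 0 < g x"
    unfolding g_def using r_pos f_pos by (intro sum_pos) auto
  have Q4: "\<And>x k. x \<in> space M \<Longrightarrow> r k * f k x = p k x * g x"
  proof -
    fix x k assume x: "x \<in> space M"
    define C where "C = exp (\<epsilon> None - \<beta> x) / r None"
    have C: "0 < C" using r_pos by (simp add: C_def)
    have "p k x = (r k * f k x * C) / (\<Sum>l\<in>UNIV. r l * f l x * C)"
      unfolding p_def p_star_def using expE[OF x] by (simp add: C_def)
    also have "\<dots> = r k * f k x / g x"
      using C by (simp add: g_def sum_distrib_right[symmetric])
    finally have "p k x = r k * f k x / g x" .
    then show "r k * f k x = p k x * g x" using g_pos[OF x] by simp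
  qed
  have int_ss: "\<And>k i j. integrable (P k) (\<lambda>x. s k x $ i * s k x $ j)"
  proof -
    fix k i j
    have "(\<integral>\<^sup>+x. ennreal (norm (s k x $ i * s k x $ j)) \<partial>P k) \<le> (\<integral>\<^sup>+x. ennreal ((norm (s k x))\<^sup>2) \<partial>P k)"
    proof (intro nn_integral_mono ennreal_leI)
      fix x
      have "\<bar>s k x $ i\<bar> * \<bar>s k x $ j\<bar> \<le> norm (s k x) * norm (s k x)"
        by (intro mult_mono component_le_norm_cart) auto
      then show "norm (s k x $ i * s k x $ j) \<le> (norm (s k x))\<^sup>2" by (simp add: abs_mult power2_eq_square)
    qed
    also have "\<dots> < \<infinity>" using grad_sq[of k] by (simp add: s_def P_def)
    finally have fin: "(\<integral>\<^sup>+x. ennreal (norm (s k x $ i * s k x $ j)) \<partial>P k) < \<infinity>" .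
    have "(\<lambda>x. s k x $ i * s k x $ j) \<in> borel_measurable (P k)"
      unfolding P_eq measurable_density_eq1 by measurable
    then show "integrable (P k) (\<lambda>x. s k x $ i * s k x $ j)"
      using fin by (rule integrableI_bounded)
  qed
  have int_s: "\<And>k i. integrable (P k) (\<lambda>x. s k x $ i)"
  proof -
    fix k i
    interpret prob_space "P k" by (rule probP)
    have "integrable (P k) (\<lambda>x. 1 + s k x $ i * s k x $ i)"
      using int_ss by simp
    moreover have "(\<lambda>x. s k x $ i) \<in> borel_measurable (P k)"
      unfolding P_eq measurable_density_eq1 by measurable
    moreover have "AE x in P k. norm (s k x $ i) \<le> norm (1 + s k x $ i * s k x $ i)"
    proof (intro AE_I2)
      fix x
      have "\<bar>s k x $ i\<bar> \<le> 1 + s k x $ i * s k x $ i" by (rule abs_le_1_sq)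
      moreover have "0 \<le> s k x $ i * s k x $ i" by simp
      ultimately show "norm (s k x $ i) \<le> norm (1 + s k x $ i * s k x $ i)" by simp
    qed
    ultimately show "integrable (P k) (\<lambda>x. s k x $ i)" by (rule Bochner_Integration.integrable_bound)
  qed
  have int_H: "\<And>k i j. integrable (P k) (\<lambda>x. H k x $ i $ j)"
  proof -
    fix k i j
    have "(\<integral>\<^sup>+x. ennreal (norm (H k x $ i $ j)) \<partial>P k) \<le> (\<integral>\<^sup>+x. ennreal (norm (H k x)) \<partial>P k)"
    proof (intro nn_integral_mono ennreal_leI)
      fix x show "norm (H k x $ i $ j) \<le> norm (H k x)"
        using Finite_Cartesian_Product.norm_nth_le[of "H k x $ i" j] Finite_Cartesian_Product.norm_nth_le[of "H k x" i]
        by linarith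
    qed
    also have "\<dots> < \<infinity>" using hess_int[of k] by (simp add: H_def P_def)
    finally have fin: "(\<integral>\<^sup>+x. ennreal (norm (H k x $ i $ j)) \<partial>P k) < \<infinity>" .
    have "(\<lambda>x. H k x $ i $ j) \<in> borel_measurable (P k)"
      unfolding P_eq measurable_density_eq1 by measurable
    then show "integrable (P k) (\<lambda>x. H k x $ i $ j)"
      using fin by (rule integrableI_bounded)
  qed
  have int_sp: "\<And>l k i. integrable (P l) (\<lambda>x. s l x $ i * p k x)"
  proof -
    fix l k i
    have m: "(\<lambda>x. s l x $ i * p k x) \<in> borel_measurable (P l)"
      unfolding P_eq measurable_density_eq1 by measurable
    have ae: "AE x in P l. norm (s l x $ i * p k x) \<le> norm (s l x $ i)"
    proof (intro AE_I2)
      fix x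
      have "\<bar>s l x $ i\<bar> * p k x \<le> \<bar>s l x $ i\<bar> * 1"
        using p_le1[of k x] by (intro mult_left_mono) auto
      then show "norm (s l x $ i * p k x) \<le> norm (s l x $ i)"
        using p_pos[of k x] by (simp add: abs_mult)
    qed
    show "integrable (P l) (\<lambda>x. s l x $ i * p k x)"
      using Bochner_Integration.integrable_bound[OF int_s m ae] .
  qed
  have mix: "(\<Sum>l\<in>UNIV. r l * integral\<^sup>L (P l) (h l)) = 0"
    if hi: "\<And>l. integrable (P l) (h l)" and hm: "\<And>l. h l \<in> borel_measurable M"
      and hz: "\<And>x. x \<in> space M \<Longrightarrow> (\<Sum>l\<in>UNIV. p l x * h l x) = 0" for h
  proof -
    have hiM: "\<And>l. integrable M (\<lambda>x. r l * (f l x * h l x))"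
      using hi integrableP[OF hm] by simp
    have "(\<Sum>l\<in>UNIV. r l * integral\<^sup>L (P l) (h l)) = (\<Sum>l\<in>UNIV. (\<integral>x. r l * (f l x * h l x) \<partial>M))"
      by (simp add: intP[OF hm])
    also have "\<dots> = (\<integral>x. (\<Sum>l\<in>UNIV. r l * (f l x * h l x)) \<partial>M)"
      using hiM by (simp add: integral_sum)
    also have "\<dots> = (\<integral>x. 0 \<partial>M)"
    proof (rule Bochner_Integration.integral_cong[OF refl])
      fix x assume x: "x \<in> space M"
      have "(\<Sum>l\<in>UNIV. r l * (f l x * h l x)) = (\<Sum>l\<in>UNIV. g x * (p l x * h l x))"
      proof (intro sum.cong refl)
        fix l
        have "r l * (f l x * h l x) = (r l * f l x) * h l x" by (simp only: mult.assoc)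
        also have "\<dots> = (p l x * g x) * h l x" by (simp only: Q4[OF x])
        also have "\<dots> = g x * (p l x * h l x)" by algebra
        finally show "r l * (f l x * h l x) = g x * (p l x * h l x)" .
      qed
      also have "\<dots> = 0" by (simp only: sum_distrib_left[symmetric] hz[OF x] mult_zero_right)
      finally show "(\<Sum>l\<in>UNIV. r l * (f l x * h l x)) = 0" .
    qed
    finally show ?thesis by simp
  qed

  define A where "A i j = (\<Sum>k\<in>UNIV. r k * integral\<^sup>L (P k) (\<lambda>x. s k x $ i * s k x $ j))" for i j
  define m where "m k i = integral\<^sup>L (P k) (\<lambda>x. s k x $ i)" for k i
  define v where "v k b = (case b of Inl _ \<Rightarrow> 0 | Inr j \<Rightarrow>
      (if k = Some j then 1 / r k else 0) - (if k = None then 1 / r None else 0))" for k and b :: "'s + 'k"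
  define Ib where "Ib = Ibar M \<psi> y r f lam0"
  define Sb where "Sb = Sigmabar M \<psi> y r f lam0"
  have A_sym: "\<And>i j. A i j = A j i" by (simp add: A_def mult.commute)
  have IbE: "\<And>i j. Ib $ i $ j = (\<Sum>k\<in>UNIV. r k * integral\<^sup>L (P k) (\<lambda>x. - (H k x $ i $ j)))"
    by (simp add: Ib_def Ibar_def H_def P_def)
  have SbE: "\<And>i j. Sb $ i $ j = (\<Sum>k\<in>UNIV. r k * integral\<^sup>L (P k) (\<lambda>x. (s k x $ i - m k i) * (s k x $ j - m k j)))"
    by (simp add: Sb_def Sigmabar_def cov_mat_def s_def P_def m_def)
  have K1: "\<And>i j. Ib $ i $ j = A i j"
  proof -
    fix i j
    have z: "(\<Sum>l\<in>UNIV. r l * integral\<^sup>L (P l) (\<lambda>x. H l x $ i $ j + s l x $ i * s l x $ j)) = 0"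
    proof (rule mix)
      fix l show "integrable (P l) (\<lambda>x. H l x $ i $ j + s l x $ i * s l x $ j)"
        by (intro Bochner_Integration.integrable_add int_H int_ss)
    next
      fix l show "(\<lambda>x. H l x $ i $ j + s l x $ i * s l x $ j) \<in> borel_measurable M" by measurable
    next
      fix x assume "x \<in> space M"
      then show "(\<Sum>l\<in>UNIV. p l x * (H l x $ i $ j + s l x $ i * s l x $ j)) = 0" by (rule Q2)
    qed
    have "\<And>l. integral\<^sup>L (P l) (\<lambda>x. H l x $ i $ j + s l x $ i * s l x $ j)
       = integral\<^sup>L (P l) (\<lambda>x. H l x $ i $ j) + integral\<^sup>L (P l) (\<lambda>x. s l x $ i * s l x $ j)"
      by (intro Bochner_Integration.integral_add int_H int_ss)
    then have "(\<Sum>l\<in>UNIV. r l * integral\<^sup>L (P l) (\<lambda>x. H l x $ i $ j)) + A i j = 0"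
      using z by (simp add: A_def distrib_left sum.distrib)
    then show "Ib $ i $ j = A i j"
      by (simp add: IbE sum_negf)
  qed
  have Cv: "\<And>i j. Sb $ i $ j = A i j - (\<Sum>k\<in>UNIV. r k * (m k i * m k j))"
  proof -
    fix i j
    have "\<And>k. integral\<^sup>L (P k) (\<lambda>x. (s k x $ i - m k i) * (s k x $ j - m k j))
       = integral\<^sup>L (P k) (\<lambda>x. s k x $ i * s k x $ j) - m k i * m k j"
      unfolding m_def by (rule cov_expand[OF probP int_s int_s int_ss])
    then show "Sb $ i $ j = A i j - (\<Sum>k\<in>UNIV. r k * (m k i * m k j))"
      by (simp add: SbE A_def right_diff_distrib sum_subtractf)
  qed

  have sv: "(\<Sum>b\<in>UNIV. s l x $ b * v k b) = ((if l = k then 1 else 0) - p k x) / r k"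
    if x: "x \<in> space M" for l k x
  proof -
    have "(\<Sum>b\<in>UNIV. s l x $ b * v k b) = (\<Sum>j\<in>UNIV. ((if l = Some j then 1 else 0) - p (Some j) x) * v k (Inr j))"
      by (simp add: sum_plus_UNIV v_def Q3[OF x])
    also have "\<dots> = ((if l = k then 1 else 0) - p k x) / r k"
    proof (cases k)
      case None
      have s1: "(\<Sum>j\<in>UNIV. (if l = Some j then 1 else 0::real)) = (if l = None then 0 else 1)"
        by (cases l) auto
      have neg: "\<And>X Y r. -((X - Y)/r) = (Y - X)/(r::real)" by (simp add: diff_divide_distrib)
      have s2: "(\<Sum>j\<in>UNIV. p (Some j) x) = 1 - p None x"
        using p_sum[of x] by (simp add: sum_option_UNIV)
      have "(\<Sum>j\<in>UNIV. ((if l = Some j then 1 else 0) - p (Some j) x) * v k (Inr j))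
          = ((\<Sum>j\<in>UNIV. p (Some j) x) - (\<Sum>j\<in>UNIV. (if l = Some j then 1 else 0::real))) / r None"
        using neg by (simp add: None v_def sum_negf sum_divide_distrib[symmetric] sum_subtractf)
      also have "\<dots> = ((if l = k then 1 else 0) - p k x) / r k"
        unfolding s1 s2 by (simp add: None)
      finally show ?thesis .
    next
      case (Some j0)
      have "\<And>j. ((if l = Some j then 1 else 0) - p (Some j) x) * v k (Inr j)
          = (if j = j0 then ((if l = k then 1 else 0) - p k x) / r k else 0)"
        by (auto simp: Some v_def)
      then show ?thesis by simp
    qed
    finally show ?thesis .
  qed
  have K2: "(\<Sum>b\<in>UNIV. A i b * v k b) = m k i" for i k
  proof -
    have "(\<Sum>b\<in>UNIV. A i b * v k b) = (\<Sum>l\<in>UNIV. r l * (\<Sum>b\<in>UNIV. integral\<^sup>L (P l) (\<lambda>x. s l x $ i * s l x $ b) * v k b))"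
      unfolding A_def by (simp add: sum_distrib_left sum_distrib_right mult_ac sum.swap[of _ "UNIV::'k option set"])
    also have "\<dots> = (\<Sum>l\<in>UNIV. r l * integral\<^sup>L (P l) (\<lambda>x. s l x $ i * (((if l = k then 1 else 0) - p k x) / r k)))"
    proof (intro sum.cong refl arg_cong2[where f="(*)"])
      fix l
      have "(\<Sum>b\<in>UNIV. integral\<^sup>L (P l) (\<lambda>x. s l x $ i * s l x $ b) * v k b)
          = integral\<^sup>L (P l) (\<lambda>x. \<Sum>b\<in>UNIV. s l x $ i * s l x $ b * v k b)"
        using int_ss by (simp add: Bochner_Integration.integral_sum)
      also have "\<dots> = integral\<^sup>L (P l) (\<lambda>x. s l x $ i * (((if l = k then 1 else 0) - p k x) / r k))"
      proof (rule Bochner_Integration.integral_cong[OF refl])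
        fix x assume "x \<in> space (P l)"
        then have x: "x \<in> space M" by (simp add: P_eq)
        show "(\<Sum>b\<in>UNIV. s l x $ i * s l x $ b * v k b) = s l x $ i * (((if l = k then 1 else 0) - p k x) / r k)"
          using sv[OF x, of l k] by (simp add: mult.assoc sum_distrib_left[symmetric])
      qed
      finally show "(\<Sum>b\<in>UNIV. integral\<^sup>L (P l) (\<lambda>x. s l x $ i * s l x $ b) * v k b)
          = integral\<^sup>L (P l) (\<lambda>x. s l x $ i * (((if l = k then 1 else 0) - p k x) / r k))" .
    qed
    also have "\<dots> = (\<Sum>l\<in>UNIV. r l * ((if l = k then 1 else 0) * m l i - integral\<^sup>L (P l) (\<lambda>x. s l x $ i * p k x)) / r k)"
    proof (intro sum.cong refl)
      fix l
      have e: "(\<lambda>x. s l x $ i * (((if l = k then 1 else 0) - p k x) / r k))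
          = (\<lambda>x. ((if l = k then 1 else 0) * s l x $ i - s l x $ i * p k x) / r k)"
        by (auto simp: algebra_simps)
      show "r l * integral\<^sup>L (P l) (\<lambda>x. s l x $ i * (((if l = k then 1 else 0) - p k x) / r k))
          = r l * ((if l = k then 1 else 0) * m l i - integral\<^sup>L (P l) (\<lambda>x. s l x $ i * p k x)) / r k"
        unfolding e using int_s int_sp by (simp add: m_def Bochner_Integration.integral_diff)
    qed
    also have "\<dots> = ((\<Sum>l\<in>UNIV. r l * ((if l = k then 1 else 0) * m l i)) - (\<Sum>l\<in>UNIV. r l * integral\<^sup>L (P l) (\<lambda>x. s l x $ i * p k x))) / r k"
      by (simp only: sum_divide_distrib[symmetric] right_diff_distrib sum_subtractf)
    also have "(\<Sum>l\<in>UNIV. r l * ((if l = k then 1 else 0) * m l i)) = r k * m k i"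
    proof -
      have d: "\<And>l. r l * ((if l = k then 1 else 0) * m l i) = (if l = k then r k * m k i else 0)" by auto
      show ?thesis unfolding d by simp
    qed
    also have "(\<Sum>l\<in>UNIV. r l * integral\<^sup>L (P l) (\<lambda>x. s l x $ i * p k x)) = 0"
    proof (rule mix)
      fix l show "integrable (P l) (\<lambda>x. s l x $ i * p k x)" by (rule int_sp)
    next
      fix l show "(\<lambda>x. s l x $ i * p k x) \<in> borel_measurable M" by measurable
    next
      fix x assume x: "x \<in> space M"
      have "(\<Sum>l\<in>UNIV. p l x * (s l x $ i * p k x)) = p k x * (\<Sum>l\<in>UNIV. p l x * s l x $ i)"
        by (simp add: sum_distrib_left mult_ac)
      then show "(\<Sum>l\<in>UNIV. p l x * (s l x $ i * p k x)) = 0" using Q1[OF x] by simp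
    qed
    finally show ?thesis using r_pos[of k] by simp
  qed

  have vN: "\<And>a. v None (Inr a) = - (1 / r None)" by (simp add: v_def)
  have vS: "\<And>j a. v (Some j) (Inr a) = (if j = a then 1 / r (Some j) else 0)" by (simp add: v_def)
  have vL: "\<And>k a. v k (Inl a) = 0" by (simp add: v_def)
  have npos: "0 < real n" using n_pos by simp
  have Wv: "Wblock nk $ a $ b = (\<Sum>k\<in>UNIV. (r k / real n) * (v k a * v k b))" for a b
  proof (cases a)
    case (Inl a')
    then show ?thesis by (simp add: Wblock_def vL)
  next
    case (Inr a')
    show ?thesis
    proof (cases b)
      case (Inl b')
      then show ?thesis using Inr by (simp add: Wblock_def vL)
    next
      case (Inr b')
      have t0: "r None / real n * (v None a * v None b) = 1 / real (nk None)"
        using r_pos[of None] npos \<open>a = Inr a'\<close> Inr by (simp add: vN nk_def)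
      have t1: "\<And>j. r (Some j) / real n * (v (Some j) a * v (Some j) b)
          = (if j = a' then (if a' = b' then 1 / real (nk (Some a')) else 0) else 0)"
        using r_pos npos \<open>a = Inr a'\<close> Inr by (auto simp: vS nk_def)
      have "(\<Sum>k\<in>UNIV. (r k / real n) * (v k a * v k b)) = 1 / real (nk None) + (if a' = b' then 1 / real (nk (Some a')) else 0)"
        unfolding sum_option_UNIV t0 t1 by simp
      then show ?thesis using \<open>a = Inr a'\<close> Inr by (simp add: Wblock_def)
    qed
  qed
  have I_eq: "I = real n *\<^sub>R Ib" by (simp add: I_def Ib_def lam0_def)
  have Sig_eq: "Sig = real n *\<^sub>R Sb" by (simp add: Sig_def Sb_def lam0_def)
  have partA: "I - Sig = I ** Wblock nk ** I"
  proof (simp only: vec_eq_iff, intro allI)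
    fix i j
    have "(I - Sig) $ i $ j = real n * (\<Sum>k\<in>UNIV. r k * (m k i * m k j))"
      by (simp add: I_eq Sig_eq K1 Cv right_diff_distrib)
    moreover have "(I ** Wblock nk ** I) $ i $ j = real n * (\<Sum>k\<in>UNIV. r k * (m k i * m k j))"
    proof -
      have "(I ** Wblock nk ** I) $ i $ j
          = (\<Sum>b\<in>UNIV. (\<Sum>a\<in>UNIV. (real n * A i a) * (\<Sum>k\<in>UNIV. (r k / real n) * (v k a * v k b))) * (real n * A j b))"
        by (simp add: matrix_matrix_mult_def I_eq K1 Wv A_sym[of _ j])
      also have "\<dots> = (\<Sum>k\<in>UNIV. (r k / real n) * (\<Sum>a\<in>UNIV. (real n * A i a) * v k a) * (\<Sum>b\<in>UNIV. (real n * A j b) * v k b))"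
        by (rule triple) auto
      also have "\<dots> = (\<Sum>k\<in>UNIV. (r k / real n) * (real n * m k i) * (real n * m k j))"
        by (simp add: mult.assoc sum_distrib_left[symmetric] K2)
      also have "\<dots> = real n * (\<Sum>k\<in>UNIV. r k * (m k i * m k j))"
        using npos by (simp add: sum_distrib_left field_simps)
      finally show ?thesis .
    qed
    ultimately show "(I - Sig) $ i $ j = (I ** Wblock nk ** I) $ i $ j" by simp
  qed
  have inv: "invertible I"
  proof -
    have "\<forall>x. I *v x = 0 \<longrightarrow> x = 0"
      using I_pd unfolding pos_def_def by (metis inner_zero_right less_irrefl)
    then have "\<exists>B. B ** I = mat 1" by (simp add: matrix_left_invertible_ker)
    then show ?thesis by (simp add: invertible_left_inverse)
  qed
  define J where "J = matrix_inv I"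
  have J: "I ** J = mat 1 \<and> J ** I = mat 1"
    using someI_ex[OF inv[unfolded invertible_def]] by (simp add: J_def matrix_inv_def)
  have SigW: "Sig = I - I ** Wblock nk ** I" using partA by (simp add: algebra_simps)
  have "J ** Sig ** J = J - Wblock nk"
  proof -
    have "J ** Sig ** J = (J ** I - J ** I ** Wblock nk ** I) ** J"
      by (simp add: SigW matrix_diff_ldistrib matrix_mul_assoc)
    also have "\<dots> = J - Wblock nk"
      using J by (simp add: matrix_diff_rdistrib matrix_mul_assoc[symmetric])
    finally show ?thesis .
  qed
  moreover have "theta_block (J - Wblock nk) = theta_block J"
    by (simp add: theta_block_def Wblock_def vec_eq_iff)
  ultimately show ?thesis using partA by (simp add: J_def)
qed

end
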